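(* Let $P$ be a weighted combinatorial optimization problem and let $A$ be a deterministic algorithm for $P$ that uses symbolic perturbation. Let $\mathcal{C}$ be any null case of $P$. Then the following three statements hold. (a) If $A(S,w) \in L$ for every instance $(S,w) \notin \mathcal{C}$, then $A(S,w) \in L$ for every instance $(S,w)$ of $P$. (b) Suppose that for each structure $S$, a nonnegative integer $\rho_S(\pi)$ (e.g. running time or memory consumption) is assigned to every root-to-leaf path $\pi$ of $T_S$. Let $\pi(S,w)$ denote the path traversed by $A$ on input $(S,w)$. Let $t : P \to \mathbb{N}$, and suppose $\rho_S(\pi(S,w)) \le t(S)$ for every instance $(S,w) \notin \mathcal{C}$. Then $\rho_S(\pi(S,w)) \le t(S)$ for every instance $(S,w)$. (c) Suppose $A(S,w) \in L$ for every instance $(S,w)$. For each $S=(n,W,L,\mathrm{cost}) \in P$, let $b(S,\cdot) : W \to \mathbb{R}$ be continuous. If $\mathrm{cost}(w, A(S,w)) \le b(S,w)$ for every instance $(S,w) \notin \mathcal{C}$, then this inequality holds for every instance $(S,w)$.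
   Context: Let $Q$ be a subfield of $\mathbb{R}$ (e.g. $\mathbb{R}$, $\mathbb{Q}$, or the real algebraic numbers). Equip $Q^n$ with the Euclidean metric $d$. For $x \in Q^n$ and $\epsilon>0$, the $\epsilon$-neighborhood of $x$ is $\{y \in Q^n \mid d(x,y)<\epsilon\}$. A neighborhood of $x$ is an $\epsilon$-neighborhood of $x$ for some $\epsilon>0$. A set $U \subseteq Q^n$ is open if it contains a neighborhood of each of its points. A set $C \subseteq Q^n$ is nowhere open if it contains no non-empty open subset of $Q^n$. A set $X \subseteq Q^n$ is semi-open if for every $x \in X$ and every neighborhood $N$ of $x$ there is a non-empty open set $U \subseteq Q^n$ with $U \subseteq N \cap X$. For $x \in \mathbb{R}$, $\mathrm{sgn}(x) = x/|x|$ if $x \neq 0$ and $\mathrm{sgn}(0)=0$. Problems: A weighted combinatorial optimization (minimization) problem $P$ is a set of problem structures; each structure $S=(n,W,L,\mathrm{cost})$ consists of a positive integer $n$, a semi-open set $W \subseteq Q^n$ of admissible weight vectors, a finite non-empty set $L$ of feasible solutions, and a function $\mathrm{cost} : W \times L \to \mathbb{R}$ such that $\mathrm{cost}(\cdot,l)$ is continuous on $W$ for every $l \in L$. An instance is a pair $(S,w)$ with $S \in P$ and $w \in W$. A null case of $P$ is a set $\mathcal{C}$ of instances of $P$ such that for every structure $S=(n,W,L,\mathrm{cost}) \in P$ the set $\{w \in W \mid (S,w) \in \mathcal{C}\}$ is nowhere open. Algorithms: A deterministic algorithm $A$ for $P$ assigns to each structure $S=(n,W,L,\mathrm{cost}) \in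 P$ a finite rooted binary decision tree $T_S$. Each leaf is labelled with an element of $L \cup \{l_f\}$, where $l_f \notin L$ is a special symbol representing failure. Each internal node $u$ is labelled with a continuous branching function $v_u : W \to Q$. On input $(S,w)$, $A$ starts at the root of $T_S$. At an internal node $u$ it moves to the left child if $v_u(w)<0$ and to the right child if $v_u(w)>0$. If $v_u(w)=0$ (a tie), it moves to the left or right child according to a deterministic tie-breaking policy, i.e. a rule fixing, for every instance $(S,w)$ and every internal node $u$ with $v_u(w)=0$, which child is taken. $A$ returns the label $A(S,w)$ of the leaf reached. Directions: Let $W \subseteq Q^n$ be semi-open, $w \in W$, and $h : \mathbb{R} \to Q^n$ with $h(0)=0$ and $h$ continuous at $0$. $W$ continues into direction $h$ at $w$ if there is $\delta>0$ such that for every $0<a<\delta$ some neighborhood of $w+h(a)$ is contained in $W$. If $W$ continues into direction $h$ at $w$ and $f : W \to Q$ is continuous, then $f$ is increasing (resp. constant, decreasing) into direction $h$ at $w$ if the following holds: there is $\delta>0$ such that for every $0<a<\delta$ there is a neighborhood $N_a \subseteq W$ of $w+h(a)$ with $\mathrm{sgn}(f(y)-f(w)) = 1$ (resp. $0$, $-1$) for all $y \in N_a$. Symbolic perturbation: $A$ uses symbolic perturbation if, for every instance $(S,w)$ with $S=(n,W,L,\mathrm{cost})$, there exists a function $h_{S,w} : \mathbb{R} \to Q^n$ satisfying all of the following: - $h_{S,w}(0)=0$ and $h_{S,w}$ is continuous at $0$; - $W$ continues into direction $h_{S,w}$ at $w$; - every branching function of $T_S$ is decreasing, constant, or increasing into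 direction $h_{S,w}$ at $w$; - whenever a tie $v_u(w)=0$ occurs at an internal node $u$ on input $(S,w)$, $A$ takes the left child if $v_u$ is decreasing into direction $h_{S,w}$ at $w$, and the right child otherwise. *)

theory Defs
  imports Complex_Main
begin

definition subfield_real :: "real set \<Rightarrow> bool" where
  "subfield_real Q \<longleftrightarrow> 0 \<in> Q \<and> 1 \<in> Q \<and>
     (\<forall>x\<in>Q. \<forall>y\<in>Q. x + y \<in> Q \<and> x * y \<in> Q) \<and>
     (\<forall>x\<in>Q. - x \<in> Q) \<and> (\<forall>x\<in>Q. x \<noteq> 0 \<longrightarrow> inverse x \<in> Q)"

definition Qn :: "real set \<Rightarrow> nat \<Rightarrow> (nat \<Rightarrow> real) set" where
  "Qn Q n = {x. (\<forall>i<n. x i \<in> Q) \<and> (\<forall>i\<ge>n. x i = 0)}"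

definition qdist :: "nat \<Rightarrow> (nat \<Rightarrow> real) \<Rightarrow> (nat \<Rightarrow> real) \<Rightarrow> real" where
  "qdist n x y = sqrt (\<Sum>i<n. (x i - y i)^2)"

definition vzero :: "nat \<Rightarrow> real" where
  "vzero = (\<lambda>i. 0)"

definition vadd :: "(nat \<Rightarrow> real) \<Rightarrow> (nat \<Rightarrow> real) \<Rightarrow> (nat \<Rightarrow> real)" where
  "vadd x y = (\<lambda>i. x i + y i)"

definition nbhd :: "real set \<Rightarrow> nat \<Rightarrow> (nat \<Rightarrow> real) \<Rightarrow> real \<Rightarrow> (nat \<Rightarrow> real) set" where
  "nbhd Q n x \<epsilon> = {y \<in> Qn Q n. qdist n x y < \<epsilon>}"

definition qopen :: "real set \<Rightarrow> nat \<Rightarrow> (nat \<Rightarrow> real) set \<Rightarrow> bool" where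
  "qopen Q n U \<longleftrightarrow> U \<subseteq> Qn Q n \<and> (\<forall>x\<in>U. \<exists>\<epsilon>>0. nbhd Q n x \<epsilon> \<subseteq> U)"

definition nowhere_open :: "real set \<Rightarrow> nat \<Rightarrow> (nat \<Rightarrow> real) set \<Rightarrow> bool" where
  "nowhere_open Q n C \<longleftrightarrow> \<not> (\<exists>U. U \<noteq> {} \<and> qopen Q n U \<and> U \<subseteq> C)"

definition semi_open :: "real set \<Rightarrow> nat \<Rightarrow> (nat \<Rightarrow> real) set \<Rightarrow> bool" where
  "semi_open Q n X \<longleftrightarrow> X \<subseteq> Qn Q n \<and>
     (\<forall>x\<in>X. \<forall>\<epsilon>>0. \<exists>U. U \<noteq> {} \<and> qopen Q n U \<and> U \<subseteq> nbhd Q n x \<epsilon> \<inter> X)"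

definition qcont :: "nat \<Rightarrow> (nat \<Rightarrow> real) set \<Rightarrow> ((nat \<Rightarrow> real) \<Rightarrow> real) \<Rightarrow> bool" where
  "qcont n W f \<longleftrightarrow> (\<forall>x\<in>W. \<forall>e>0. \<exists>d>0. \<forall>y\<in>W. qdist n x y < d \<longrightarrow> \<bar>f y - f x\<bar> < e)"

record 'l wstruct =
  dim :: nat
  wts :: "(nat \<Rightarrow> real) set"
  sols :: "'l set"
  cost :: "(nat \<Rightarrow> real) \<Rightarrow> 'l \<Rightarrow> real"

definition wco_problem :: "real set \<Rightarrow> 'l wstruct set \<Rightarrow> bool" where
  "wco_problem Q P \<longleftrightarrow> (\<forall>S\<in>P. 0 < dim S \<and> semi_open Q (dim S) (wts S) \<and>
     finite (sols S) \<and> sols S \<noteq> {} \<and>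
     (\<forall>l\<in>sols S. qcont (dim S) (wts S) (\<lambda>w. cost S w l)))"

definition null_case :: "real set \<Rightarrow> 'l wstruct set \<Rightarrow> ('l wstruct \<times> (nat \<Rightarrow> real)) set \<Rightarrow> bool" where
  "null_case Q P C \<longleftrightarrow> (\<forall>S\<in>P. nowhere_open Q (dim S) {w \<in> wts S. (S, w) \<in> C})"

text \<open>Leaves carry an element of L (as Some l) or the failure symbol (None). Nodes are addressed by their position,
  the list of directions from the root (False = left, True = right).\<close>

datatype 'l dtree = Leaf "'l option" | Node "(nat \<Rightarrow> real) \<Rightarrow> real" "'l dtree" "'l dtree"

fun leaf_labels :: "'l dtree \<Rightarrow> 'l option set" where
  "leaf_labels (Leaf x) = {x}"
| "leaf_labels (Node v l r) = leaf_labels l \<union> leaf_labels r"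

fun branch_funs :: "'l dtree \<Rightarrow> ((nat \<Rightarrow> real) \<Rightarrow> real) set" where
  "branch_funs (Leaf x) = {}"
| "branch_funs (Node v l r) = insert v (branch_funs l \<union> branch_funs r)"

fun subtree :: "'l dtree \<Rightarrow> bool list \<Rightarrow> 'l dtree" where
  "subtree t [] = t"
| "subtree (Node v l r) (d # ds) = subtree (if d then r else l) ds"
| "subtree (Leaf x) (d # ds) = Leaf x"

fun leaf_label :: "'l dtree \<Rightarrow> 'l option" where
  "leaf_label (Leaf x) = x"
| "leaf_label (Node v l r) = None"

text \<open>Path (list of directions) traversed from the node at position p, using the
  tie-breaking policy tb (tb p = True means: go to the right child on a tie at node p).\<close>
fun run_path :: "'l dtree \<Rightarrow> (bool list \<Rightarrow> bool) \<Rightarrow> (nat \<Rightarrow> real) \<Rightarrow> bool list \<Rightarrow> bool list" where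
  "run_path (Leaf x) tb w p = []"
| "run_path (Node v l r) tb w p =
     (let d = (if v w < 0 then False else if 0 < v w then True else tb p)
      in d # run_path (if d then r else l) tb w (p @ [d]))"

text \<open>An algorithm is given by T (tree per structure) and tb (tie-breaking policy per
  instance and node position).\<close>
definition alg_path :: "('l wstruct \<Rightarrow> 'l dtree) \<Rightarrow> ('l wstruct \<Rightarrow> (nat \<Rightarrow> real) \<Rightarrow> bool list \<Rightarrow> bool)
     \<Rightarrow> 'l wstruct \<Rightarrow> (nat \<Rightarrow> real) \<Rightarrow> bool list" where
  "alg_path T tb S w = run_path (T S) (tb S w) w []"

definition alg_out :: "('l wstruct \<Rightarrow> 'l dtree) \<Rightarrow> ('l wstruct \<Rightarrow> (nat \<Rightarrow> real) \<Rightarrow> bool list \<Rightarrow> bool)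
     \<Rightarrow> 'l wstruct \<Rightarrow> (nat \<Rightarrow> real) \<Rightarrow> 'l option" where
  "alg_out T tb S w = leaf_label (subtree (T S) (alg_path T tb S w))"

definition det_algorithm :: "real set \<Rightarrow> 'l wstruct set \<Rightarrow> ('l wstruct \<Rightarrow> 'l dtree) \<Rightarrow> bool" where
  "det_algorithm Q P T \<longleftrightarrow> (\<forall>S\<in>P. leaf_labels (T S) \<subseteq> insert None (Some ` sols S) \<and>
     (\<forall>v\<in>branch_funs (T S). qcont (dim S) (wts S) v \<and> (\<forall>w\<in>wts S. v w \<in> Q)))"

definition continues_into :: "real set \<Rightarrow> nat \<Rightarrow> (nat \<Rightarrow> real) set \<Rightarrow> (real \<Rightarrow> nat \<Rightarrow> real)
     \<Rightarrow> (nat \<Rightarrow> real) \<Rightarrow> bool" where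
  "continues_into Q n W h w \<longleftrightarrow>
     (\<exists>\<delta>>0. \<forall>a. 0 < a \<and> a < \<delta> \<longrightarrow> (\<exists>\<epsilon>>0. nbhd Q n (vadd w (h a)) \<epsilon> \<subseteq> W))"

definition dir_sign :: "real set \<Rightarrow> nat \<Rightarrow> (nat \<Rightarrow> real) set \<Rightarrow> ((nat \<Rightarrow> real) \<Rightarrow> real)
     \<Rightarrow> (real \<Rightarrow> nat \<Rightarrow> real) \<Rightarrow> (nat \<Rightarrow> real) \<Rightarrow> real \<Rightarrow> bool" where
  "dir_sign Q n W f h w s \<longleftrightarrow> continues_into Q n W h w \<and> qcont n W f \<and>
     (\<exists>\<delta>>0. \<forall>a. 0 < a \<and> a < \<delta> \<longrightarrow>
        (\<exists>\<epsilon>>0. nbhd Q n (vadd w (h a)) \<epsilon> \<subseteq> W \<and>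
           (\<forall>y\<in>nbhd Q n (vadd w (h a)) \<epsilon>. sgn (f y - f w) = s)))"

definition symbolic_perturbation :: "real set \<Rightarrow> 'l wstruct set \<Rightarrow> ('l wstruct \<Rightarrow> 'l dtree)
     \<Rightarrow> ('l wstruct \<Rightarrow> (nat \<Rightarrow> real) \<Rightarrow> bool list \<Rightarrow> bool) \<Rightarrow> bool" where
  "symbolic_perturbation Q P T tb \<longleftrightarrow>
    (\<forall>S\<in>P. \<forall>w\<in>wts S. \<exists>h :: real \<Rightarrow> nat \<Rightarrow> real.
       (\<forall>a. h a \<in> Qn Q (dim S)) \<and> h 0 = vzero \<and>
       (\<forall>e>0. \<exists>d>0. \<forall>a. \<bar>a\<bar> < d \<longrightarrow> qdist (dim S) (h a) (h 0) < e) \<and>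
       continues_into Q (dim S) (wts S) h w \<and>
       (\<forall>v\<in>branch_funs (T S). dir_sign Q (dim S) (wts S) v h w (-1) \<or>
           dir_sign Q (dim S) (wts S) v h w 0 \<or> dir_sign Q (dim S) (wts S) v h w 1) \<and>
       (\<forall>k < length (alg_path T tb S w).
          (case subtree (T S) (take k (alg_path T tb S w)) of
             Leaf x \<Rightarrow> True
           | Node v l r \<Rightarrow> v w = 0 \<longrightarrow>
               tb S w (take k (alg_path T tb S w)) = (\<not> dir_sign Q (dim S) (wts S) v h w (-1)))))"

end

theory Submission
  imports Defs "HOL-Analysis.L2_Norm"
begin

lemma qdist_L2: "qdist n x y = L2_set (\<lambda>i. x i - y i) {..<n}"
  by (simp add: qdist_def L2_set_def)

lemma qdist_tri: "qdist n x z \<le> qdist n x y + qdist n y z"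
proof -
  have "qdist n x z = L2_set (\<lambda>i. (x i - y i) + (y i - z i)) {..<n}"
    by (simp add: qdist_L2)
  also have "\<dots> \<le> qdist n x y + qdist n y z"
    unfolding qdist_L2 by (rule L2_set_triangle_ineq)
  finally show ?thesis .
qed

lemma qdist_sym: "qdist n x y = qdist n y x"
  by (simp add: qdist_def power2_commute)

lemma qdist_self: "qdist n x x = 0"
  by (simp add: qdist_def)

lemma qdist_vadd: "qdist n w (vadd w x) = qdist n x vzero"
  by (simp add: qdist_def vadd_def vzero_def power2_commute)

lemma vadd_Qn: assumes "subfield_real Q" "x \<in> Qn Q n" "y \<in> Qn Q n"
  shows "vadd x y \<in> Qn Q n"
  using assms unfolding subfield_real_def Qn_def vadd_def by auto

lemma center_in: "c \<in> Qn Q n \<Longrightarrow> e > 0 \<Longrightarrow> c \<in> nbhd Q n c e"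
  by (simp add: nbhd_def qdist_self)

lemma nbhd_mono: "e1 \<le> e2 \<Longrightarrow> nbhd Q n c e1 \<subseteq> nbhd Q n c e2"
  by (auto simp: nbhd_def)

lemma nbhd_open: "qopen Q n (nbhd Q n c r)"
  unfolding qopen_def
proof (intro conjI ballI)
  show "nbhd Q n c r \<subseteq> Qn Q n" by (auto simp: nbhd_def)
  fix z assume z: "z \<in> nbhd Q n c r"
  have "\<forall>u\<in>nbhd Q n z (r - qdist n c z). u \<in> nbhd Q n c r"
  proof
    fix u assume "u \<in> nbhd Q n z (r - qdist n c z)"
    then show "u \<in> nbhd Q n c r"
      using qdist_tri[of n c u z] by (auto simp: nbhd_def)
  qed
  then show "\<exists>\<epsilon>>0. nbhd Q n z \<epsilon> \<subseteq> nbhd Q n c r"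
    using z by (intro exI[of _ "r - qdist n c z"]) (auto simp: nbhd_def)
qed

lemma finite_branch_funs: "finite (branch_funs t)"
  by (induction t) auto

lemma subtree_branch: "subtree t q = Node v l r \<Longrightarrow> v \<in> branch_funs t"
  by (induction t q rule: subtree.induct) (auto split: if_splits)

lemma fin_min:
  fixes P :: "'a \<Rightarrow> real \<Rightarrow> bool"
  assumes "finite A" "\<forall>x\<in>A. \<exists>d>0. \<forall>e. 0<e \<and> e\<le>d \<longrightarrow> P x e"
  shows "\<exists>d>0. \<forall>x\<in>A. \<forall>e. 0<e \<and> e\<le>d \<longrightarrow> P x e"
  using assms
proof (induction A rule: finite_induct)
  case empty
  show ?case by (intro exI[of _ 1]) auto
next
  case (insert a A)
  then obtain d1 where d1: "d1>0" "\<forall>x\<in>A. \<forall>e. 0<e \<and> e\<le>d1 \<longrightarrow> P x e" by auto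
  from insert obtain d2 where d2: "d2>0" "\<forall>e. 0<e \<and> e\<le>d2 \<longrightarrow> P a e" by auto
  show ?case using d1 d2 by (intro exI[of _ "min d1 d2"]) auto
qed

lemma dir_unique:
  assumes sf: "subfield_real Q" and wQ: "w \<in> Qn Q n" and hQ: "\<forall>a. h a \<in> Qn Q n"
    and d1: "dir_sign Q n W v h w s1" and d2: "dir_sign Q n W v h w s2"
  shows "s1 = s2"
proof -
  obtain t1 where t1: "t1>0" "\<forall>a. 0 < a \<and> a < t1 \<longrightarrow>
        (\<exists>\<epsilon>>0. nbhd Q n (vadd w (h a)) \<epsilon> \<subseteq> W \<and>
           (\<forall>y\<in>nbhd Q n (vadd w (h a)) \<epsilon>. sgn (v y - v w) = s1))"
    using d1 unfolding dir_sign_def by blast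
  obtain t2 where t2: "t2>0" "\<forall>a. 0 < a \<and> a < t2 \<longrightarrow>
        (\<exists>\<epsilon>>0. nbhd Q n (vadd w (h a)) \<epsilon> \<subseteq> W \<and>
           (\<forall>y\<in>nbhd Q n (vadd w (h a)) \<epsilon>. sgn (v y - v w) = s2))"
    using d2 unfolding dir_sign_def by blast
  define a where "a = min t1 t2 / 2"
  have a: "0 < a" "a < t1" "a < t2" using t1 t2 by (auto simp: a_def)
  have cQ: "vadd w (h a) \<in> Qn Q n" using vadd_Qn[OF sf wQ] hQ by blast
  obtain e1 where e1: "e1>0" "\<forall>y\<in>nbhd Q n (vadd w (h a)) e1. sgn (v y - v w) = s1"
    using t1(2) a by blast
  obtain e2 where e2: "e2>0" "\<forall>y\<in>nbhd Q n (vadd w (h a)) e2. sgn (v y - v w) = s2"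
    using t2(2) a by blast
  show ?thesis using e1 e2 center_in[OF cQ] by metis
qed

lemma not_dec:
  assumes sf: "subfield_real Q" and yQ: "y \<in> Qn Q n" and hQ: "\<forall>a. hy a \<in> Qn Q n"
    and h0: "hy 0 = vzero"
    and hc: "\<forall>e>0. \<exists>d>0. \<forall>a. \<bar>a\<bar> < d \<longrightarrow> qdist n (hy a) (hy 0) < e"
    and yU: "y \<in> nbhd Q n c r" and zero: "\<forall>z\<in>nbhd Q n c r. v z = v y"
  shows "\<not> dir_sign Q n W v hy y (-1)"
proof
  assume ds: "dir_sign Q n W v hy y (-1)"
  obtain t1 where t1: "t1>0" "\<forall>a. 0 < a \<and> a < t1 \<longrightarrow>
        (\<exists>\<epsilon>>0. nbhd Q n (vadd y (hy a)) \<epsilon> \<subseteq> W \<and>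
           (\<forall>z\<in>nbhd Q n (vadd y (hy a)) \<epsilon>. sgn (v z - v y) = -1))"
    using ds unfolding dir_sign_def by blast
  have g: "r - qdist n c y > 0" using yU by (auto simp: nbhd_def)
  then obtain dh where dh: "dh>0" "\<forall>a. \<bar>a\<bar> < dh \<longrightarrow> qdist n (hy a) (hy 0) < r - qdist n c y"
    using hc by blast
  define a where "a = min t1 dh / 2"
  have a: "0 < a" "a < t1" "\<bar>a\<bar> < dh" using t1 dh by (auto simp: a_def)
  define z where "z = vadd y (hy a)"
  have zQ: "z \<in> Qn Q n" using vadd_Qn[OF sf yQ] hQ z_def by blast
  obtain e1 where e1: "e1>0" "\<forall>u\<in>nbhd Q n z e1. sgn (v u - v y) = -1"
    using t1(2) a z_def by blast
  have s: "sgn (v z - v y) = -1" using e1 center_in[OF zQ] by blast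
  have "qdist n y z = qdist n (hy a) (hy 0)" using h0 by (simp add: z_def qdist_vadd)
  then have "qdist n c z < r" using qdist_tri[of n c z y] dh(2) a(3) by force
  then have "z \<in> nbhd Q n c r" using zQ by (simp add: nbhd_def)
  then have "v z = v y" using zero by blast
  then show False using s by simp
qed

lemma rp_eq:
  "(\<And>k v l r. k < length (run_path t tb1 w p) \<Longrightarrow> k < length (run_path t tb2 y p) \<Longrightarrow>
     take k (run_path t tb2 y p) = take k (run_path t tb1 w p) \<Longrightarrow>
     subtree t (take k (run_path t tb1 w p)) = Node v l r \<Longrightarrow>
     (if v w < 0 then False else if 0 < v w then True else tb1 (p @ take k (run_path t tb1 w p))) =
     (if v y < 0 then False else if 0 < v y then True else tb2 (p @ take k (run_path t tb1 w p))))
   \<Longrightarrow> run_path t tb1 w p = run_path t tb2 y p"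
proof (induction t arbitrary: p)
  case (Leaf x)
  show ?case by simp
next
  case (Node v l r)
  define d1 where "d1 = (if v w < 0 then False else if 0 < v w then True else tb1 p)"
  define d2 where "d2 = (if v y < 0 then False else if 0 < v y then True else tb2 p)"
  have e1: "run_path (Node v l r) tb1 w p = d1 # run_path (if d1 then r else l) tb1 w (p @ [d1])"
    by (simp add: d1_def Let_def)
  have e2: "run_path (Node v l r) tb2 y p = d2 # run_path (if d2 then r else l) tb2 y (p @ [d2])"
    by (simp add: d2_def Let_def)
  have "(if v w < 0 then False else if 0 < v w then True else tb1 (p @ take 0 (run_path (Node v l r) tb1 w p))) =
     (if v y < 0 then False else if 0 < v y then True else tb2 (p @ take 0 (run_path (Node v l r) tb1 w p)))"
    by (rule Node.prems) (unfold e1 e2, simp_all)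
  then have dd: "d1 = d2" by (simp only: take_0 append_Nil2 d1_def d2_def)
  have H: "\<And>k v' l' r'. k < length (run_path (if d1 then r else l) tb1 w (p @ [d1])) \<Longrightarrow>
     k < length (run_path (if d1 then r else l) tb2 y (p @ [d1])) \<Longrightarrow>
     take k (run_path (if d1 then r else l) tb2 y (p @ [d1])) = take k (run_path (if d1 then r else l) tb1 w (p @ [d1])) \<Longrightarrow>
     subtree (if d1 then r else l) (take k (run_path (if d1 then r else l) tb1 w (p @ [d1]))) = Node v' l' r' \<Longrightarrow>
     (if v' w < 0 then False else if 0 < v' w then True else tb1 ((p @ [d1]) @ take k (run_path (if d1 then r else l) tb1 w (p @ [d1])))) =
     (if v' y < 0 then False else if 0 < v' y then True else tb2 ((p @ [d1]) @ take k (run_path (if d1 then r else l) tb1 w (p @ [d1]))))"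
  proof -
    fix k v' l' r'
    assume a1: "k < length (run_path (if d1 then r else l) tb1 w (p @ [d1]))"
      and a2: "k < length (run_path (if d1 then r else l) tb2 y (p @ [d1]))"
      and a3: "take k (run_path (if d1 then r else l) tb2 y (p @ [d1])) = take k (run_path (if d1 then r else l) tb1 w (p @ [d1]))"
      and a4: "subtree (if d1 then r else l) (take k (run_path (if d1 then r else l) tb1 w (p @ [d1]))) = Node v' l' r'"
    show "(if v' w < 0 then False else if 0 < v' w then True else tb1 ((p @ [d1]) @ take k (run_path (if d1 then r else l) tb1 w (p @ [d1])))) =
     (if v' y < 0 then False else if 0 < v' y then True else tb2 ((p @ [d1]) @ take k (run_path (if d1 then r else l) tb1 w (p @ [d1]))))"
    proof -
      have "(if v' w < 0 then False else if 0 < v' w then True else tb1 (p @ take (Suc k) (run_path (Node v l r) tb1 w p))) =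
        (if v' y < 0 then False else if 0 < v' y then True else tb2 (p @ take (Suc k) (run_path (Node v l r) tb1 w p)))"
        by (rule Node.prems) (use a1 a2 a3 a4 dd in \<open>unfold e1 e2, simp_all\<close>)
      then show ?thesis by (simp only: e1 take_Suc_Cons append_assoc append_Cons append_Nil)
    qed
  qed
  have rest: "run_path (if d1 then r else l) tb1 w (p @ [d1]) = run_path (if d1 then r else l) tb2 y (p @ [d1])"
  proof (cases d1)
    case True
    show ?thesis unfolding if_P[OF True] by (rule Node.IH(2)[OF H[unfolded if_P[OF True]]])
  next
    case False
    show ?thesis unfolding if_not_P[OF False] by (rule Node.IH(1)[OF H[unfolded if_not_P[OF False]]])
  qed
  show ?case unfolding e1 e2 using rest dd by simp
qed

lemma key:
  assumes sf: "subfield_real Q" and wp: "wco_problem Q P" and da: "det_algorithm Q P T"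
    and sp: "symbolic_perturbation Q P T tb" and nc: "null_case Q P C"
    and S: "S \<in> P" and w: "w \<in> wts S" and ep: "\<epsilon> > 0"
  shows "\<exists>y\<in>wts S. (S,y) \<notin> C \<and> qdist (dim S) w y < \<epsilon> \<and> alg_path T tb S y = alg_path T tb S w"
proof -
  have finF: "finite (branch_funs (T S))" by (rule finite_branch_funs)
  have WQ: "wts S \<subseteq> Qn Q (dim S)" using wp S unfolding wco_problem_def semi_open_def by auto
  have wQ: "w \<in> Qn Q (dim S)" using WQ w by auto
  have contF: "\<forall>v\<in>branch_funs (T S). qcont (dim S) (wts S) v" using da S unfolding det_algorithm_def by auto
  have "\<forall>v\<in>branch_funs (T S). \<exists>d>0. \<forall>e. 0<e \<and> e\<le>d \<longrightarrow>
      (\<forall>y\<in>wts S. qdist (dim S) w y < e \<longrightarrow> v w \<noteq> 0 \<longrightarrow> \<bar>v y - v w\<bar> < \<bar>v w\<bar>)"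
  proof
    fix v assume v: "v \<in> branch_funs (T S)"
    show "\<exists>d>0. \<forall>e. 0<e \<and> e\<le>d \<longrightarrow>
      (\<forall>y\<in>wts S. qdist (dim S) w y < e \<longrightarrow> v w \<noteq> 0 \<longrightarrow> \<bar>v y - v w\<bar> < \<bar>v w\<bar>)"
    proof (cases "v w = 0")
      case True
      then show ?thesis by (intro exI[of _ 1]) auto
    next
      case False
      then have "\<bar>v w\<bar> > 0" by simp
      with contF v w obtain d where "d>0" "\<forall>y\<in>wts S. qdist (dim S) w y < d \<longrightarrow> \<bar>v y - v w\<bar> < \<bar>v w\<bar>"
        unfolding qcont_def by blast
      then show ?thesis by (intro exI[of _ d]) auto
    qed
  qed
  from fin_min[OF finF this] obtain d0 where d0: "d0>0" "\<forall>v\<in>branch_funs (T S). \<forall>e. 0<e \<and> e\<le>d0 \<longrightarrow>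
      (\<forall>y\<in>wts S. qdist (dim S) w y < e \<longrightarrow> v w \<noteq> 0 \<longrightarrow> \<bar>v y - v w\<bar> < \<bar>v w\<bar>)" by blast
  define e0 where "e0 = min \<epsilon> d0"
  have e0: "e0 > 0" "e0 \<le> \<epsilon>" "e0 \<le> d0" using ep d0 by (auto simp: e0_def)
  have cont_w: "\<And>v y. v \<in> branch_funs (T S) \<Longrightarrow> y \<in> wts S \<Longrightarrow> qdist (dim S) w y < e0 \<Longrightarrow> v w \<noteq> 0 \<Longrightarrow> \<bar>v y - v w\<bar> < \<bar>v w\<bar>"
    using d0(2) e0 by blast
  obtain h where hQ: "\<forall>a. h a \<in> Qn Q (dim S)" and h0: "h 0 = vzero"
    and hc: "\<forall>e>0. \<exists>d>0. \<forall>a. \<bar>a\<bar> < d \<longrightarrow> qdist (dim S) (h a) (h 0) < e"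
    and hci: "continues_into Q (dim S) (wts S) h w"
    and hdir: "\<forall>v\<in>branch_funs (T S). dir_sign Q (dim S) (wts S) v h w (-1) \<or> dir_sign Q (dim S) (wts S) v h w 0 \<or> dir_sign Q (dim S) (wts S) v h w 1"
    and htb: "\<forall>k < length (alg_path T tb S w).
          (case subtree (T S) (take k (alg_path T tb S w)) of
             Leaf x \<Rightarrow> True
           | Node v l r \<Rightarrow> v w = 0 \<longrightarrow>
               tb S w (take k (alg_path T tb S w)) = (\<not> dir_sign Q (dim S) (wts S) v h w (-1)))"
    using sp S w unfolding symbolic_perturbation_def by blast
  have "\<forall>v\<in>branch_funs (T S). \<exists>d>0. \<forall>e. 0<e \<and> e\<le>d \<longrightarrow>
     (\<exists>s\<in>{-1,0,1}. dir_sign Q (dim S) (wts S) v h w s \<and> (\<forall>a. 0 < a \<and> a < e \<longrightarrow>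
        (\<exists>\<epsilon>'>0. nbhd Q (dim S) (vadd w (h a)) \<epsilon>' \<subseteq> wts S \<and>
           (\<forall>y\<in>nbhd Q (dim S) (vadd w (h a)) \<epsilon>'. sgn (v y - v w) = s))))"
  proof
    fix v assume v: "v \<in> branch_funs (T S)"
    then obtain s where s: "s \<in> {-1,0,1}" "dir_sign Q (dim S) (wts S) v h w s" using hdir by blast
    then obtain d where d: "d > 0" "\<forall>a. 0 < a \<and> a < d \<longrightarrow>
        (\<exists>\<epsilon>'>0. nbhd Q (dim S) (vadd w (h a)) \<epsilon>' \<subseteq> wts S \<and>
           (\<forall>y\<in>nbhd Q (dim S) (vadd w (h a)) \<epsilon>'. sgn (v y - v w) = s))"
      unfolding dir_sign_def by blast
    show "\<exists>d>0. \<forall>e. 0<e \<and> e\<le>d \<longrightarrow>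
     (\<exists>s\<in>{-1,0,1}. dir_sign Q (dim S) (wts S) v h w s \<and> (\<forall>a. 0 < a \<and> a < e \<longrightarrow>
        (\<exists>\<epsilon>'>0. nbhd Q (dim S) (vadd w (h a)) \<epsilon>' \<subseteq> wts S \<and>
           (\<forall>y\<in>nbhd Q (dim S) (vadd w (h a)) \<epsilon>'. sgn (v y - v w) = s))))"
      apply (rule exI[of _ d])
      using d s by force
  qed
  from fin_min[OF finF this] obtain d1 where d1: "d1 > 0" "\<forall>v\<in>branch_funs (T S).
     (\<exists>s\<in>{-1,0,1}. dir_sign Q (dim S) (wts S) v h w s \<and> (\<forall>a. 0 < a \<and> a < d1 \<longrightarrow>
        (\<exists>\<epsilon>'>0. nbhd Q (dim S) (vadd w (h a)) \<epsilon>' \<subseteq> wts S \<and>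
           (\<forall>y\<in>nbhd Q (dim S) (vadd w (h a)) \<epsilon>'. sgn (v y - v w) = s))))"
    by blast
  then obtain sv where sv: "\<forall>v\<in>branch_funs (T S). sv v \<in> {-1,0,1} \<and> dir_sign Q (dim S) (wts S) v h w (sv v) \<and>
     (\<forall>a. 0 < a \<and> a < d1 \<longrightarrow>
        (\<exists>\<epsilon>'>0. nbhd Q (dim S) (vadd w (h a)) \<epsilon>' \<subseteq> wts S \<and>
           (\<forall>y\<in>nbhd Q (dim S) (vadd w (h a)) \<epsilon>'. sgn (v y - v w) = sv v)))"
    by (metis (no_types, lifting) bchoice)
  obtain dh where dh: "dh > 0" "\<forall>a. \<bar>a\<bar> < dh \<longrightarrow> qdist (dim S) (h a) (h 0) < e0/2"
    using hc e0 by (meson half_gt_zero)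
  obtain dc where dc: "dc > 0" "\<forall>a. 0 < a \<and> a < dc \<longrightarrow> (\<exists>\<epsilon>>0. nbhd Q (dim S) (vadd w (h a)) \<epsilon> \<subseteq> wts S)"
    using hci unfolding continues_into_def by blast
  define a where "a = min (min d1 dh) dc / 2"
  have a: "0 < a" "a < d1" "\<bar>a\<bar> < dh" "a < dc" using d1 dh dc by (auto simp: a_def)
  define c where "c = vadd w (h a)"
  have cQ: "c \<in> Qn Q (dim S)" using vadd_Qn[OF sf wQ] hQ c_def by blast
  have "\<forall>v\<in>branch_funs (T S). \<exists>d>0. \<forall>e. 0<e \<and> e\<le>d \<longrightarrow>
      (\<forall>y\<in>nbhd Q (dim S) c e. sgn (v y - v w) = sv v)"
  proof
    fix v assume "v \<in> branch_funs (T S)"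
    then obtain e' where "e' > 0" "\<forall>y\<in>nbhd Q (dim S) c e'. sgn (v y - v w) = sv v"
      using sv a c_def by blast
    then show "\<exists>d>0. \<forall>e. 0<e \<and> e\<le>d \<longrightarrow> (\<forall>y\<in>nbhd Q (dim S) c e. sgn (v y - v w) = sv v)"
      using nbhd_mono by (intro exI[of _ e']) blast
  qed
  from fin_min[OF finF this] obtain r1 where r1: "r1 > 0"
    "\<forall>v\<in>branch_funs (T S). \<forall>y\<in>nbhd Q (dim S) c r1. sgn (v y - v w) = sv v" by blast
  obtain ec where ec: "ec > 0" "nbhd Q (dim S) c ec \<subseteq> wts S" using dc a c_def by blast
  define r where "r = min (min r1 ec) (e0/2)"
  have r: "r > 0" "r \<le> r1" "r \<le> ec" "r \<le> e0/2" using r1 ec e0 by (auto simp: r_def)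
  define U where "U = nbhd Q (dim S) c r"
  have UW: "U \<subseteq> wts S" using nbhd_mono[OF r(3)] ec U_def by blast
  have Une: "U \<noteq> {}" using center_in[OF cQ r(1)] U_def by blast
  have "\<not> U \<subseteq> {w \<in> wts S. (S, w) \<in> C}"
    using nc S Une nbhd_open[of Q "dim S" c r] unfolding null_case_def nowhere_open_def U_def by blast
  then obtain y where yU: "y \<in> U" and yC: "(S, y) \<notin> C" using UW by blast
  have yW: "y \<in> wts S" using yU UW by blast
  have yQ: "y \<in> Qn Q (dim S)" using yU U_def by (simp add: nbhd_def)
  have "qdist (dim S) w c < e0/2" using dh a h0 by (simp add: c_def qdist_vadd)
  moreover have "qdist (dim S) c y < e0/2" using yU r U_def by (simp add: nbhd_def)
  ultimately have wy: "qdist (dim S) w y < e0" using qdist_tri[of "dim S" w y c] by linarith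
  have sy: "\<And>v. v \<in> branch_funs (T S) \<Longrightarrow> sgn (v y - v w) = sv v"
    using r1(2) nbhd_mono[OF r(2)] yU U_def by blast
  have sU: "\<And>v z. v \<in> branch_funs (T S) \<Longrightarrow> z \<in> U \<Longrightarrow> sgn (v z - v w) = sv v"
    using r1(2) nbhd_mono[OF r(2)] U_def by blast
  obtain hy where hyQ: "\<forall>a. hy a \<in> Qn Q (dim S)" and hy0: "hy 0 = vzero"
    and hyc: "\<forall>e>0. \<exists>d>0. \<forall>a. \<bar>a\<bar> < d \<longrightarrow> qdist (dim S) (hy a) (hy 0) < e"
    and hytb: "\<forall>k < length (alg_path T tb S y).
          (case subtree (T S) (take k (alg_path T tb S y)) of
             Leaf x \<Rightarrow> True
           | Node v l r \<Rightarrow> v y = 0 \<longrightarrow>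
               tb S y (take k (alg_path T tb S y)) = (\<not> dir_sign Q (dim S) (wts S) v hy y (-1)))"
    using sp S yW unfolding symbolic_perturbation_def by blast
  have "run_path (T S) (tb S w) w [] = run_path (T S) (tb S y) y []"
  proof (rule rp_eq)
    fix k v l r'
    assume k1: "k < length (run_path (T S) (tb S w) w [])"
      and k2: "k < length (run_path (T S) (tb S y) y [])"
      and tk: "take k (run_path (T S) (tb S y) y []) = take k (run_path (T S) (tb S w) w [])"
      and nd: "subtree (T S) (take k (run_path (T S) (tb S w) w [])) = Node v l r'"
    have vF: "v \<in> branch_funs (T S)" using nd by (rule subtree_branch)
    show "(if v w < 0 then False else if 0 < v w then True else tb S w ([] @ take k (run_path (T S) (tb S w) w []))) =
     (if v y < 0 then False else if 0 < v y then True else tb S y ([] @ take k (run_path (T S) (tb S w) w [])))"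
    proof (cases "v w = 0")
      case False
      have "\<bar>v y - v w\<bar> < \<bar>v w\<bar>" using cont_w[OF vF yW wy False] .
      then show ?thesis using False by (auto simp: abs_if split: if_splits)
    next
      case True
      have tbw: "tb S w (take k (alg_path T tb S w)) = (\<not> dir_sign Q (dim S) (wts S) v h w (-1))"
        using htb k1 nd True unfolding alg_path_def by fastforce
      have svv: "sv v \<in> {-1,0,1}" "dir_sign Q (dim S) (wts S) v h w (sv v)" using sv vF by auto
      have uq: "\<And>s. dir_sign Q (dim S) (wts S) v h w s \<Longrightarrow> s = sv v"
        using dir_unique[OF sf wQ hQ] svv(2) by blast
      have sgy: "sgn (v y) = sv v" using sy[OF vF] True by simp
      consider "sv v = -1" | "sv v = 0" | "sv v = 1" using svv(1) by blast
      then show ?thesis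
      proof cases
        case 1
        then have "v y < 0" using sgy by (simp add: sgn_real_def split: if_splits)
        moreover have "tb S w (take k (alg_path T tb S w)) = False" using tbw svv(2) 1 by simp
        ultimately show ?thesis using True by (simp add: alg_path_def)
      next
        case 3
        then have "v y > 0" using sgy by (simp add: sgn_real_def split: if_splits)
        moreover have "tb S w (take k (alg_path T tb S w)) = True" using tbw uq 3 by force
        ultimately show ?thesis using True by (simp add: alg_path_def)
      next
        case 2
        then have vy: "v y = 0" using sgy by (simp add: sgn_real_def split: if_splits)
        have "tb S w (take k (alg_path T tb S w)) = True" using tbw uq 2 by force
        moreover have "tb S y (take k (alg_path T tb S w)) = True"
        proof -
          have zero: "\<forall>z\<in>nbhd Q (dim S) c r. v z = v y"
          proof
            fix z assume "z \<in> nbhd Q (dim S) c r"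
            then have "sgn (v z - v w) = 0" using sU[OF vF, of z] 2 U_def by simp
            then show "v z = v y" using True vy by (simp add: sgn_real_def split: if_splits)
          qed
          have nd': "\<not> dir_sign Q (dim S) (wts S) v hy y (-1)"
            by (rule not_dec[OF sf yQ hyQ hy0 hyc _ zero]) (use yU U_def in simp)
          have "tb S y (take k (alg_path T tb S y)) = (\<not> dir_sign Q (dim S) (wts S) v hy y (-1))"
            using hytb k2 tk nd vy unfolding alg_path_def by fastforce
          then show ?thesis using nd' tk unfolding alg_path_def by simp
        qed
        ultimately show ?thesis using True vy by (simp add: alg_path_def)
      qed
    qed
  qed
  then have "alg_path T tb S y = alg_path T tb S w" by (simp add: alg_path_def)
  then show ?thesis using yW yC wy e0 by auto
qed

theorem theorem2:
  fixes Q :: "real set" and P :: "'l wstruct set"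
    and T :: "'l wstruct \<Rightarrow> 'l dtree"
    and tb :: "'l wstruct \<Rightarrow> (nat \<Rightarrow> real) \<Rightarrow> bool list \<Rightarrow> bool"
    and C :: "('l wstruct \<times> (nat \<Rightarrow> real)) set"
  assumes "subfield_real Q"
    and "wco_problem Q P"
    and "det_algorithm Q P T"
    and "symbolic_perturbation Q P T tb"
    and "null_case Q P C"
  shows
   "((\<forall>S\<in>P. \<forall>w\<in>wts S. (S, w) \<notin> C \<longrightarrow> alg_out T tb S w \<in> Some ` sols S) \<longrightarrow>
       (\<forall>S\<in>P. \<forall>w\<in>wts S. alg_out T tb S w \<in> Some ` sols S))
    \<and> (\<forall>(\<rho> :: 'l wstruct \<Rightarrow> bool list \<Rightarrow> nat) (t :: 'l wstruct \<Rightarrow> nat).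
        (\<forall>S\<in>P. \<forall>w\<in>wts S. (S, w) \<notin> C \<longrightarrow> \<rho> S (alg_path T tb S w) \<le> t S) \<longrightarrow>
        (\<forall>S\<in>P. \<forall>w\<in>wts S. \<rho> S (alg_path T tb S w) \<le> t S))
    \<and> (\<forall>b :: 'l wstruct \<Rightarrow> (nat \<Rightarrow> real) \<Rightarrow> real.
        (\<forall>S\<in>P. \<forall>w\<in>wts S. alg_out T tb S w \<in> Some ` sols S) \<longrightarrow>
        (\<forall>S\<in>P. qcont (dim S) (wts S) (b S)) \<longrightarrow>
        (\<forall>S\<in>P. \<forall>w\<in>wts S. (S, w) \<notin> C \<longrightarrow> cost S w (the (alg_out T tb S w)) \<le> b S w) \<longrightarrow>
        (\<forall>S\<in>P. \<forall>w\<in>wts S. cost S w (the (alg_out T tb S w)) \<le> b S w))"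
proof -
  note K = key[OF assms]
  have out: "\<And>S w y. alg_path T tb S y = alg_path T tb S w \<Longrightarrow> alg_out T tb S y = alg_out T tb S w"
    by (simp add: alg_out_def)
  have A: "(\<forall>S\<in>P. \<forall>w\<in>wts S. (S, w) \<notin> C \<longrightarrow> alg_out T tb S w \<in> Some ` sols S) \<longrightarrow>
       (\<forall>S\<in>P. \<forall>w\<in>wts S. alg_out T tb S w \<in> Some ` sols S)"
  proof (intro impI ballI)
    fix S w assume H: "\<forall>S\<in>P. \<forall>w\<in>wts S. (S, w) \<notin> C \<longrightarrow> alg_out T tb S w \<in> Some ` sols S"
      and S: "S \<in> P" and w: "w \<in> wts S"
    obtain y where "y \<in> wts S" "(S,y) \<notin> C" "alg_path T tb S y = alg_path T tb S w"
      using K[OF S w, of 1] by auto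
    then show "alg_out T tb S w \<in> Some ` sols S" using H S out by metis
  qed
  have B: "\<forall>(\<rho> :: 'l wstruct \<Rightarrow> bool list \<Rightarrow> nat) (t :: 'l wstruct \<Rightarrow> nat).
        (\<forall>S\<in>P. \<forall>w\<in>wts S. (S, w) \<notin> C \<longrightarrow> \<rho> S (alg_path T tb S w) \<le> t S) \<longrightarrow>
        (\<forall>S\<in>P. \<forall>w\<in>wts S. \<rho> S (alg_path T tb S w) \<le> t S)"
  proof (intro allI impI ballI)
    fix \<rho> :: "'l wstruct \<Rightarrow> bool list \<Rightarrow> nat" and t :: "'l wstruct \<Rightarrow> nat" and S w
    assume H: "\<forall>S\<in>P. \<forall>w\<in>wts S. (S, w) \<notin> C \<longrightarrow> \<rho> S (alg_path T tb S w) \<le> t S"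
      and S: "S \<in> P" and w: "w \<in> wts S"
    obtain y where "y \<in> wts S" "(S,y) \<notin> C" "alg_path T tb S y = alg_path T tb S w"
      using K[OF S w, of 1] by auto
    then show "\<rho> S (alg_path T tb S w) \<le> t S" using H S by metis
  qed
  have Cc: "\<forall>b :: 'l wstruct \<Rightarrow> (nat \<Rightarrow> real) \<Rightarrow> real.
        (\<forall>S\<in>P. \<forall>w\<in>wts S. alg_out T tb S w \<in> Some ` sols S) \<longrightarrow>
        (\<forall>S\<in>P. qcont (dim S) (wts S) (b S)) \<longrightarrow>
        (\<forall>S\<in>P. \<forall>w\<in>wts S. (S, w) \<notin> C \<longrightarrow> cost S w (the (alg_out T tb S w)) \<le> b S w) \<longrightarrow>
        (\<forall>S\<in>P. \<forall>w\<in>wts S. cost S w (the (alg_out T tb S w)) \<le> b S w)"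
  proof (intro allI impI ballI)
    fix b :: "'l wstruct \<Rightarrow> (nat \<Rightarrow> real) \<Rightarrow> real" and S w
    assume Hs: "\<forall>S\<in>P. \<forall>w\<in>wts S. alg_out T tb S w \<in> Some ` sols S"
      and Hb: "\<forall>S\<in>P. qcont (dim S) (wts S) (b S)"
      and H: "\<forall>S\<in>P. \<forall>w\<in>wts S. (S, w) \<notin> C \<longrightarrow> cost S w (the (alg_out T tb S w)) \<le> b S w"
      and S: "S \<in> P" and w: "w \<in> wts S"
    define l where "l = the (alg_out T tb S w)"
    have l: "l \<in> sols S" using Hs S w l_def by force
    have cc: "qcont (dim S) (wts S) (\<lambda>w. cost S w l)"
      using assms(2) S l unfolding wco_problem_def by blast
    show "cost S w (the (alg_out T tb S w)) \<le> b S w"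
    proof (rule ccontr)
      assume "\<not> ?thesis"
      then have g: "cost S w l - b S w > 0" by (simp add: l_def)
      define g where "g = cost S w l - b S w"
      obtain d1 where d1: "d1 > 0" "\<forall>y\<in>wts S. qdist (dim S) w y < d1 \<longrightarrow> \<bar>cost S y l - cost S w l\<bar> < g/2"
        using cc w g unfolding qcont_def g_def by (meson half_gt_zero)
      obtain d2 where d2: "d2 > 0" "\<forall>y\<in>wts S. qdist (dim S) w y < d2 \<longrightarrow> \<bar>b S y - b S w\<bar> < g/2"
        using Hb S w g unfolding qcont_def g_def by (meson half_gt_zero)
      obtain y where y: "y \<in> wts S" "(S,y) \<notin> C" "qdist (dim S) w y < min d1 d2"
          "alg_path T tb S y = alg_path T tb S w"
        using K[OF S w, of "min d1 d2"] d1 d2 by auto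
      have "cost S y l \<le> b S y" using H S y out l_def by metis
      moreover have "\<bar>cost S y l - cost S w l\<bar> < g/2" "\<bar>b S y - b S w\<bar> < g/2" using d1 d2 y by auto
      ultimately show False using g_def by linarith
    qed
  qed
  show ?thesis using A B Cc by blast
qed

end
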